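(* In the setting of the context, consider any sample path. Then for any integer $t_0\ge 0$ and any vector $\tilde Q_{t_0}$, the sequence $\{\hat Q_t\}$ is bounded below if and only if the sequence $\{\tilde Q_t\}$ defined from $t_0$ and $\tilde Q_{t_0}$ is bounded below.
   Context: Finite-space game: $S=\{1,\dots,n\}$, $S_o=S\cup\{0\}$, $0$ an absorbing termination state; at $i\in S$ players I and II have finite control sets $U(i),V(i)$; under $(u,v)$ transition to $j\in S_o$ w.p. $p_{ij}(u,v)$ with real transition cost $\hat g(i,u,v,j)$. $R=\{(i,u,v):i\in S,u\in U(i),v\in V(i)\}$; $U(0)=V(0)=\{0\}$, and all Q-factor vectors are indexed by $R\cup\{(0,0,0)\}$ with value $0$ at $(0,0,0)$. Fix a stationary randomized policy $\bar\nu$ of player II and write $\bar\nu_s=\bar\nu(\cdot\mid s)\in\mathcal P(V(s))$ (point mass at $0$ for $s=0$). For a vector $Q$, state $s$, $\tilde u\in U(s)$: $\underline Q(s,\tilde u,\bar\nu_s)=\sum_{\tilde v\in V(s)}\bar\nu_s(\tilde v)Q(s,\tilde u,\tilde v)$. Random variables (fixed along a sample path): stepsizes $\gamma_{t,\ell}\in[0,1]$, delays $0\le\tau_{\ell\tilde\ell}(t)\le t$, successors $j_t^\ell\in S_o$ for $\ell,\tilde\ell\in R$, $t\ge0$, and $\hat Q_0$. For any vector sequence $\{X_t\}$ write $X^{(\ell)}_t(\tilde\ell)=X_{\tau_{\ell\tilde\ell}(t)}(\tilde\ell)$. The sequence $\{\hat Q_t\}$ satisfies, for $\ell=(i,u,v)\in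 R$ and $s=j_t^\ell$: $\hat Q_{t+1}(i,u,v)=(1-\gamma_{t,\ell})\hat Q_t(i,u,v)+\gamma_{t,\ell}(\hat g(i,u,v,s)+\underline{\hat Q}^{(\ell)}_t(s,u_t^\ell,\bar\nu_s))$, where $u_t^\ell\in\arg\min_{\tilde u\in U(s)}\underline{\hat Q}^{(\ell)}_t(s,\tilde u,\bar\nu_s)$. Given an integer $t_0$ and a vector $\tilde Q_{t_0}$, the sequence $\{\tilde Q_t\}$ is defined by $\tilde Q_t=\tilde Q_{t_0}$ for $t\le t_0$ and, for $t\ge t_0$, $\tilde Q_{t+1}(i,u,v)=(1-\gamma_{t,\ell})\tilde Q_t(i,u,v)+\gamma_{t,\ell}(\hat g(i,u,v,s)+\underline{\tilde Q}^{(\ell)}_t(s,u_t^\ell,\bar\nu_s))$, using the same $\gamma_{t,\ell}$, $j_t^\ell$, $u_t^\ell$, $\tau_{\ell\tilde\ell}(t)$. *)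

theory Defs
  imports Complex_Main
begin

text \<open>Indices of Q-factors are triples (i,u,v) of naturals; states are 1..n, 0 is the
termination state; controls are encoded as naturals, with U 0 = V 0 = {0}.\<close>

type_synonym idx = "nat \<times> nat \<times> nat"

definition Rset :: "nat \<Rightarrow> (nat \<Rightarrow> nat set) \<Rightarrow> (nat \<Rightarrow> nat set) \<Rightarrow> idx set" where
  "Rset n U V = {(i,u,v). i \<in> {1..n} \<and> u \<in> U i \<and> v \<in> V i}"

definition qbar :: "(nat \<Rightarrow> nat set) \<Rightarrow> (nat \<Rightarrow> nat \<Rightarrow> real) \<Rightarrow> (idx \<Rightarrow> real) \<Rightarrow> nat \<Rightarrow> nat \<Rightarrow> real" where
  "qbar V nu Q s u = (\<Sum>v\<in>V s. nu s v * Q (s,u,v))"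

definition delayed :: "(idx \<Rightarrow> idx \<Rightarrow> nat \<Rightarrow> nat) \<Rightarrow> (nat \<Rightarrow> idx \<Rightarrow> real) \<Rightarrow> idx \<Rightarrow> nat \<Rightarrow> idx \<Rightarrow> real" where
  "delayed tau X l t = (\<lambda>l'. X (tau l l' t) l')"

definition bdd_below_seq :: "idx set \<Rightarrow> (nat \<Rightarrow> idx \<Rightarrow> real) \<Rightarrow> bool" where
  "bdd_below_seq R X \<longleftrightarrow> (\<exists>c. \<forall>t. \<forall>l \<in> R \<union> {(0,0,0)}. c \<le> X t l)"

end

theory Submission
  imports Defs
begin

theorem lemma4p3:
  fixes n :: nat
    and U V :: "nat \<Rightarrow> nat set"
    and nu :: "nat \<Rightarrow> nat \<Rightarrow> real"
    and ghat :: "nat \<Rightarrow> nat \<Rightarrow> nat \<Rightarrow> nat \<Rightarrow> real"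
    and gam :: "nat \<Rightarrow> idx \<Rightarrow> real"
    and tau :: "idx \<Rightarrow> idx \<Rightarrow> nat \<Rightarrow> nat"
    and j :: "nat \<Rightarrow> idx \<Rightarrow> nat"
    and uu :: "nat \<Rightarrow> idx \<Rightarrow> nat"
    and Qhat Qtil :: "nat \<Rightarrow> idx \<Rightarrow> real"
    and t0 :: nat
  assumes U_fin: "\<And>i. i \<in> {1..n} \<Longrightarrow> finite (U i) \<and> U i \<noteq> {}"
    and V_fin: "\<And>i. i \<in> {1..n} \<Longrightarrow> finite (V i) \<and> V i \<noteq> {}"
    and U0: "U 0 = {0}" and V0: "V 0 = {0}"
    and nu_prob: "\<And>s. s \<in> {0..n} \<Longrightarrow> (\<forall>v\<in>V s. 0 \<le> nu s v) \<and> (\<Sum>v\<in>V s. nu s v) = 1"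
    and gam_rng: "\<And>t l. l \<in> Rset n U V \<Longrightarrow> 0 \<le> gam t l \<and> gam t l \<le> 1"
    and tau_le: "\<And>t l l'. l \<in> Rset n U V \<Longrightarrow> l' \<in> Rset n U V \<Longrightarrow> tau l l' t \<le> t"
    and j_rng: "\<And>t l. l \<in> Rset n U V \<Longrightarrow> j t l \<in> {0..n}"
    and uu_argmin: "\<And>t l. l \<in> Rset n U V \<Longrightarrow>
        uu t l \<in> U (j t l) \<and>
        (\<forall>u'\<in>U (j t l). qbar V nu (delayed tau Qhat l t) (j t l) (uu t l)
                          \<le> qbar V nu (delayed tau Qhat l t) (j t l) u')"
    and Qhat_term: "\<And>t. Qhat t (0,0,0) = 0"
    and Qhat_iter: "\<And>t i u v. (i,u,v) \<in> Rset n U V \<Longrightarrow>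
        Qhat (Suc t) (i,u,v) = (1 - gam t (i,u,v)) * Qhat t (i,u,v)
          + gam t (i,u,v) * (ghat i u v (j t (i,u,v))
              + qbar V nu (delayed tau Qhat (i,u,v) t) (j t (i,u,v)) (uu t (i,u,v)))"
    and Qtil_term: "\<And>t. Qtil t (0,0,0) = 0"
    and Qtil_init: "\<And>t. t \<le> t0 \<Longrightarrow> Qtil t = Qtil t0"
    and Qtil_iter: "\<And>t i u v. t0 \<le> t \<Longrightarrow> (i,u,v) \<in> Rset n U V \<Longrightarrow>
        Qtil (Suc t) (i,u,v) = (1 - gam t (i,u,v)) * Qtil t (i,u,v)
          + gam t (i,u,v) * (ghat i u v (j t (i,u,v))
              + qbar V nu (delayed tau Qtil (i,u,v) t) (j t (i,u,v)) (uu t (i,u,v)))"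
  shows "bdd_below_seq (Rset n U V) Qhat \<longleftrightarrow> bdd_below_seq (Rset n U V) Qtil"
proof -
  define R where "R = Rset n U V"
  define D where "D t l = Qhat t l - Qtil t l" for t l
  have R_eq: "R = Sigma {1..n} (\<lambda>i. U i \<times> V i)" unfolding R_def Rset_def by auto
  have finR: "finite R" unfolding R_eq using U_fin V_fin by (intro finite_SigmaI) auto
  define B where "B = Max (insert 0 ((\<lambda>(t,l). \<bar>D t l\<bar>) ` ({..t0} \<times> R)))"
  have finB: "finite (insert 0 ((\<lambda>(t,l). \<bar>D t l\<bar>) ` ({..t0} \<times> R)))" using finR by auto
  have B0: "0 \<le> B" unfolding B_def using finB by (intro Max_ge) auto
  have D0: "D t (0,0,0) = 0" for t unfolding D_def using Qhat_term Qtil_term by simp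
  have main: "\<forall>l\<in>R. \<bar>D t l\<bar> \<le> B" for t
  proof (induction t rule: less_induct)
    case (less t)
    show ?case
    proof
      fix l assume lR: "l \<in> R"
      show "\<bar>D t l\<bar> \<le> B"
      proof (cases "t \<le> t0")
        case True
        then show ?thesis unfolding B_def using finB lR
          by (intro Max_ge) (auto intro!: image_eqI[where x="(t,l)"])
      next
        case False
        then obtain t' where t': "t = Suc t'" "t0 \<le> t'" by (cases t) auto
        obtain i u v where l: "l = (i,u,v)" by (cases l) auto
        define s where "s = j t' l"
        define w where "w = uu t' l"
        have lR': "(i,u,v) \<in> Rset n U V" using lR l R_def by simp
        have s: "s \<in> {0..n}" using j_rng lR R_def s_def by auto
        have w: "w \<in> U s" using uu_argmin lR R_def s_def w_def by auto
        have g: "0 \<le> gam t' l" "gam t' l \<le> 1" using gam_rng lR R_def by auto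
        have nu: "\<forall>x\<in>V s. 0 \<le> nu s x" "(\<Sum>x\<in>V s. nu s x) = 1" using nu_prob s by auto
        have vb: "\<bar>D (tau l (s,w,x) t') (s,w,x)\<bar> \<le> B" if x: "x \<in> V s" for x
        proof (cases "s = 0")
          case True
          with w x U0 V0 have "(s,w,x) = (0,0,0)" by auto
          then show ?thesis using D0 B0 by simp
        next
          case False
          with s w x have m: "(s,w,x) \<in> R" unfolding R_def Rset_def by auto
          have "tau l (s,w,x) t' \<le> t'" using tau_le lR m R_def by auto
          then have "tau l (s,w,x) t' < t" using t' by simp
          with less m show ?thesis by blast
        qed
        have qd: "qbar V nu (delayed tau Qhat l t') s w - qbar V nu (delayed tau Qtil l t') s w
            = (\<Sum>x\<in>V s. nu s x * D (tau l (s,w,x) t') (s,w,x))"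
          unfolding qbar_def delayed_def D_def by (simp add: sum_subtractf[symmetric] algebra_simps)
        have "\<bar>\<Sum>x\<in>V s. nu s x * D (tau l (s,w,x) t') (s,w,x)\<bar>
              \<le> (\<Sum>x\<in>V s. \<bar>nu s x * D (tau l (s,w,x) t') (s,w,x)\<bar>)" by (rule sum_abs)
        also have "\<dots> \<le> (\<Sum>x\<in>V s. nu s x * B)"
          using nu vb by (intro sum_mono) (simp add: abs_mult mult_left_mono)
        also have "\<dots> = B" using nu by (simp add: sum_distrib_right[symmetric])
        finally have qb: "\<bar>qbar V nu (delayed tau Qhat l t') s w - qbar V nu (delayed tau Qtil l t') s w\<bar> \<le> B"
          using qd by simp
        have Dt: "D t l = (1 - gam t' l) * D t' l + gam t' l *
              (qbar V nu (delayed tau Qhat l t') s w - qbar V nu (delayed tau Qtil l t') s w)"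
        proof -
          have e1: "Qhat t l = (1 - gam t' l) * Qhat t' l + gam t' l * (ghat i u v s + qbar V nu (delayed tau Qhat l t') s w)"
            using Qhat_iter[OF lR', of t'] t'(1) l s_def w_def by simp
          have e2: "Qtil t l = (1 - gam t' l) * Qtil t' l + gam t' l * (ghat i u v s + qbar V nu (delayed tau Qtil l t') s w)"
            using Qtil_iter[OF t'(2) lR'] t'(1) l s_def w_def by simp
          show ?thesis unfolding D_def e1 e2 by (simp only: ring_distribs right_diff_distrib left_diff_distrib)
        qed
        have ih: "\<bar>D t' l\<bar> \<le> B" using less t' lR by auto
        have "\<bar>D t l\<bar> \<le> (1 - gam t' l) * \<bar>D t' l\<bar> + gam t' l *
              \<bar>qbar V nu (delayed tau Qhat l t') s w - qbar V nu (delayed tau Qtil l t') s w\<bar>"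
          unfolding Dt using g
          by (metis (no_types, lifting) abs_mult abs_of_nonneg abs_triangle_ineq diff_ge_0_iff_ge)
        also have "\<dots> \<le> (1 - gam t' l) * B + gam t' l * B"
          using g ih qb by (intro add_mono mult_left_mono) auto
        finally show ?thesis by (simp add: algebra_simps)
      qed
    qed
  qed
  have allD: "\<forall>t. \<forall>l\<in>R \<union> {(0,0,0)}. \<bar>D t l\<bar> \<le> B" using main D0 B0 by auto
  show ?thesis
  proof
    assume "bdd_below_seq (Rset n U V) Qhat"
    then obtain c where c: "\<forall>t. \<forall>l\<in>R \<union> {(0,0,0)}. c \<le> Qhat t l" unfolding bdd_below_seq_def R_def by auto
    have "\<forall>t. \<forall>l\<in>R \<union> {(0,0,0)}. c - B \<le> Qtil t l"
    proof (intro allI ballI)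
      fix t l assume "l \<in> R \<union> {(0,0,0)}"
      with c allD have "c \<le> Qhat t l" "\<bar>D t l\<bar> \<le> B" by auto
      then show "c - B \<le> Qtil t l" unfolding D_def by linarith
    qed
    then show "bdd_below_seq (Rset n U V) Qtil" unfolding bdd_below_seq_def R_def by blast
  next
    assume "bdd_below_seq (Rset n U V) Qtil"
    then obtain c where c: "\<forall>t. \<forall>l\<in>R \<union> {(0,0,0)}. c \<le> Qtil t l" unfolding bdd_below_seq_def R_def by auto
    have "\<forall>t. \<forall>l\<in>R \<union> {(0,0,0)}. c - B \<le> Qhat t l"
    proof (intro allI ballI)
      fix t l assume "l \<in> R \<union> {(0,0,0)}"
      with c allD have "c \<le> Qtil t l" "\<bar>D t l\<bar> \<le> B" by auto
      then show "c - B \<le> Qhat t l" unfolding D_def by linarith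
    qed
    then show "bdd_below_seq (Rset n U V) Qhat" unfolding bdd_below_seq_def R_def by blast
  qed
qed

end
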